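(* A $\star$-metric space $(X,d^\star)$ is complete if and only if every family $\{F_s\}_{s\in S}$ of closed subsets of $X$ which has the finite intersection property and which, for every $\epsilon>0$, contains a set of diameter less than $\epsilon$, has nonempty intersection $\bigcap_{s\in S}F_s\neq\emptyset$.
   Context: A $t$-definer is a function $\star:[0,\infty)\times[0,\infty)\to[0,\infty)$ such that for all $a,b,c\ge 0$: $a\star b=b\star a$; $a\star(b\star c)=(a\star b)\star c$; if $a\le b$ then $a\star c\le b\star c$; $a\star 0=a$; and $\star$ is continuous in its first variable with respect to the Euclidean topology. Given a nonempty set $X$ and a $t$-definer $\star$, a $\star$-metric on $X$ is a function $d^\star:X\times X\to[0,\infty)$ such that for all $x,y,z\in X$: $d^\star(x,y)=0$ iff $x=y$; $d^\star(x,y)=d^\star(y,x)$; and $d^\star(x,y)\le d^\star(x,z)\star d^\star(z,y)$. Closedness refers to the topology consisting of all $U\subseteq X$ such that for each $a\in U$ there is $r>0$ with $\{x: d^\star(a,x)<r\}\subseteq U$. The diameter of $A\subseteq X$ is $\delta(A)=\sup_{x,y\in A}d^\star(x,y)$, with $\delta(\emptyset)=0$. A family has the finite intersection property if every finite subfamily has nonempty intersection. A sequence $\{x_n\}$ is Cauchy if for every $\epsilon>0$ there is $k$ with $d^\star(x_n,x_m)<\epsilon$ for all $m,n\ge k$; it converges to $x$ if for every $\epsilon>0$ there is $k$ with $d^\star(x,x_n)<\epsilon$ for $n\ge k$. $(X,d^\star)$ is complete if every Cauchy sequence converges to a point of $X$. *)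

theory Defs
  imports "HOL-Analysis.Analysis"
begin

definition t_definer :: "(real \<Rightarrow> real \<Rightarrow> real) \<Rightarrow> bool" where
  "t_definer st \<longleftrightarrow>
     (\<forall>a\<ge>0. \<forall>b\<ge>0. st a b \<ge> 0) \<and>
     (\<forall>a\<ge>0. \<forall>b\<ge>0. st a b = st b a) \<and>
     (\<forall>a\<ge>0. \<forall>b\<ge>0. \<forall>c\<ge>0. st a (st b c) = st (st a b) c) \<and>
     (\<forall>a\<ge>0. \<forall>b\<ge>0. \<forall>c\<ge>0. a \<le> b \<longrightarrow> st a c \<le> st b c) \<and>
     (\<forall>a\<ge>0. st a 0 = a) \<and>
     (\<forall>b\<ge>0. continuous_on {0..} (\<lambda>a. st a b))"

definition star_metric :: "(real \<Rightarrow> real \<Rightarrow> real) \<Rightarrow> 'a set \<Rightarrow> ('a \<Rightarrow> 'a \<Rightarrow> real) \<Rightarrow> bool" where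
  "star_metric st X d \<longleftrightarrow>
     (\<forall>x\<in>X. \<forall>y\<in>X. d x y \<ge> 0) \<and>
     (\<forall>x\<in>X. \<forall>y\<in>X. d x y = 0 \<longleftrightarrow> x = y) \<and>
     (\<forall>x\<in>X. \<forall>y\<in>X. d x y = d y x) \<and>
     (\<forall>x\<in>X. \<forall>y\<in>X. \<forall>z\<in>X. d x y \<le> st (d x z) (d z y))"

definition sopen :: "'a set \<Rightarrow> ('a \<Rightarrow> 'a \<Rightarrow> real) \<Rightarrow> 'a set \<Rightarrow> bool" where
  "sopen X d U \<longleftrightarrow> U \<subseteq> X \<and> (\<forall>a\<in>U. \<exists>r>0. {x\<in>X. d a x < r} \<subseteq> U)"

definition sclosed :: "'a set \<Rightarrow> ('a \<Rightarrow> 'a \<Rightarrow> real) \<Rightarrow> 'a set \<Rightarrow> bool" where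
  "sclosed X d F \<longleftrightarrow> F \<subseteq> X \<and> sopen X d (X - F)"

definition sdiam :: "('a \<Rightarrow> 'a \<Rightarrow> real) \<Rightarrow> 'a set \<Rightarrow> ereal" where
  "sdiam d A = (if A = {} then 0 else (SUP p\<in>A \<times> A. ereal (d (fst p) (snd p))))"

definition scauchy :: "'a set \<Rightarrow> ('a \<Rightarrow> 'a \<Rightarrow> real) \<Rightarrow> (nat \<Rightarrow> 'a) \<Rightarrow> bool" where
  "scauchy X d x \<longleftrightarrow> (\<forall>e>0. \<exists>k. \<forall>m\<ge>k. \<forall>n\<ge>k. d (x n) (x m) < e)"

definition sconverges :: "('a \<Rightarrow> 'a \<Rightarrow> real) \<Rightarrow> (nat \<Rightarrow> 'a) \<Rightarrow> 'a \<Rightarrow> bool" where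
  "sconverges d x l \<longleftrightarrow> (\<forall>e>0. \<exists>k. \<forall>n\<ge>k. d l (x n) < e)"

definition scomplete :: "'a set \<Rightarrow> ('a \<Rightarrow> 'a \<Rightarrow> real) \<Rightarrow> bool" where
  "scomplete X d \<longleftrightarrow>
     (\<forall>x. (\<forall>n. x n \<in> X) \<longrightarrow> scauchy X d x \<longrightarrow> (\<exists>l\<in>X. sconverges d x l))"

definition finite_intersection_property :: "'a set set \<Rightarrow> bool" where
  "finite_intersection_property \<F> \<longleftrightarrow>
     (\<forall>\<G>. \<G> \<subseteq> \<F> \<longrightarrow> finite \<G> \<longrightarrow> \<G> \<noteq> {} \<longrightarrow> \<Inter>\<G> \<noteq> {})"

end

theory Submission
  imports Defs
begin

lemma tdef_small:
  assumes T: "t_definer st" and e: "e > 0"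
  shows "\<exists>\<delta>>0. \<forall>a b. 0 \<le> a \<longrightarrow> a \<le> \<delta> \<longrightarrow> 0 \<le> b \<longrightarrow> b \<le> \<delta> \<longrightarrow> st a b < e"
proof -
  define \<eta> where "\<eta> = e/2"
  have eta: "\<eta> > 0" "\<eta> < e" using e by (auto simp: \<eta>_def)
  have comm: "\<And>a b. a \<ge> 0 \<Longrightarrow> b \<ge> 0 \<Longrightarrow> st a b = st b a"
    and mono: "\<And>a b c. a \<ge> 0 \<Longrightarrow> b \<ge> 0 \<Longrightarrow> c \<ge> 0 \<Longrightarrow> a \<le> b \<Longrightarrow> st a c \<le> st b c"
    and zero: "\<And>a. a \<ge> 0 \<Longrightarrow> st a 0 = a"
    and cont: "continuous_on {0..} (\<lambda>a. st a \<eta>)"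
    using T eta unfolding t_definer_def by auto
  have s0: "st 0 \<eta> = \<eta>" using comm[of 0 \<eta>] zero[of \<eta>] eta by auto
  from cont have "\<exists>d>0. \<forall>x'\<in>{0..}. dist x' 0 < d \<longrightarrow> dist (st x' \<eta>) (st 0 \<eta>) < e - \<eta>"
  proof -
    have "(0::real) \<in> {0..}" by simp
    moreover have "e - \<eta> > 0" using eta by simp
    ultimately show ?thesis using cont unfolding continuous_on_iff by blast
  qed
  then obtain d0 where d0: "d0 > 0" "\<And>x'. x' \<ge> 0 \<Longrightarrow> dist x' 0 < d0 \<Longrightarrow> dist (st x' \<eta>) \<eta> < e - \<eta>"
    using s0 by auto
  define \<delta> where "\<delta> = min (d0/2) \<eta>"
  have dpos: "\<delta> > 0" using d0 eta by (auto simp: \<delta>_def)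
  have "\<delta> < d0" using d0(1) by (simp add: \<delta>_def)
  then have "dist (st \<delta> \<eta>) \<eta> < e - \<eta>" using d0(2)[of \<delta>] dpos by (simp add: dist_real_def)
  then have "st \<delta> \<eta> < e" by (simp add: dist_real_def abs_less_iff)
  moreover have "st a b \<le> st \<delta> \<eta>" if "0 \<le> a" "a \<le> \<delta>" "0 \<le> b" "b \<le> \<delta>" for a b
  proof -
    have "st a b \<le> st \<delta> b" using mono[of a \<delta> b] that by auto
    also have "\<dots> = st b \<delta>" using comm that by auto
    also have "\<dots> \<le> st \<eta> \<delta>" using mono[of b \<eta> \<delta>] that eta by (auto simp: \<delta>_def)
    also have "\<dots> = st \<delta> \<eta>" using comm that eta by auto
    finally show ?thesis .
  qed
  ultimately show ?thesis using dpos by force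
qed

lemma diam_lt:
  assumes "x \<in> A" "y \<in> A" "sdiam d A < ereal e"
  shows "d x y < e"
proof -
  have "ereal (d x y) \<le> (SUP p\<in>A \<times> A. ereal (d (fst p) (snd p)))"
    by (rule SUP_upper2[of "(x,y)"]) (use assms in auto)
  also have "\<dots> = sdiam d A" using assms by (auto simp: sdiam_def)
  finally have "ereal (d x y) < ereal e" using assms(3) by (rule le_less_trans)
  then show ?thesis by simp
qed

lemma diam_le:
  assumes "\<And>x y. x \<in> A \<Longrightarrow> y \<in> A \<Longrightarrow> d x y \<le> c" "c \<ge> 0"
  shows "sdiam d A \<le> ereal c"
  unfolding sdiam_def using assms by (auto intro!: SUP_least)

theorem theorem4p10:
  fixes st :: "real \<Rightarrow> real \<Rightarrow> real" and X :: "'a set" and d :: "'a \<Rightarrow> 'a \<Rightarrow> real"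
  assumes "t_definer st" and "X \<noteq> {}" and "star_metric st X d"
  shows "scomplete X d \<longleftrightarrow>
    (\<forall>\<F> :: 'a set set.
        (\<forall>F\<in>\<F>. sclosed X d F) \<longrightarrow>
        finite_intersection_property \<F> \<longrightarrow>
        (\<forall>e>0. \<exists>F\<in>\<F>. sdiam d F < ereal e) \<longrightarrow>
        \<Inter>\<F> \<noteq> {})"
proof -
  note T = assms(1)
  have dnn: "\<And>x y. x \<in> X \<Longrightarrow> y \<in> X \<Longrightarrow> d x y \<ge> 0"
    and d0: "\<And>x y. x \<in> X \<Longrightarrow> y \<in> X \<Longrightarrow> d x y = 0 \<longleftrightarrow> x = y"
    and dsym: "\<And>x y. x \<in> X \<Longrightarrow> y \<in> X \<Longrightarrow> d x y = d y x"
    and tri: "\<And>x y z. x \<in> X \<Longrightarrow> y \<in> X \<Longrightarrow> z \<in> X \<Longrightarrow> d x y \<le> st (d x z) (d z y)"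
    using assms(3) unfolding star_metric_def by auto
  have tri2: "d x y < e" if "x \<in> X" "y \<in> X" "z \<in> X" "d x z \<le> \<delta>" "d z y \<le> \<delta>"
    "\<forall>a b. 0 \<le> a \<longrightarrow> a \<le> \<delta> \<longrightarrow> 0 \<le> b \<longrightarrow> b \<le> \<delta> \<longrightarrow> st a b < e" for x y z \<delta> e
  proof -
    have "st (d x z) (d z y) < e" using that(6) that(4,5) dnn[of x z] dnn[of z y] that(1-3) by blast
    then show ?thesis using tri[of x y z] that(1-3) by linarith
  qed
  show ?thesis
  proof
    assume C: "scomplete X d"
    show "\<forall>\<F> :: 'a set set.
        (\<forall>F\<in>\<F>. sclosed X d F) \<longrightarrow>
        finite_intersection_property \<F> \<longrightarrow>
        (\<forall>e>0. \<exists>F\<in>\<F>. sdiam d F < ereal e) \<longrightarrow>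
        \<Inter>\<F> \<noteq> {}"
    proof (intro allI impI)
      fix \<F> :: "'a set set"
      assume cl: "\<forall>F\<in>\<F>. sclosed X d F" and fip: "finite_intersection_property \<F>"
        and sm: "\<forall>e>0. \<exists>F\<in>\<F>. sdiam d F < ereal e"
      have "\<forall>n. \<exists>F. F \<in> \<F> \<and> sdiam d F < ereal (1 / real (Suc n))"
      proof
        fix n :: nat
        have "(1 / real (Suc n)) > 0" by simp
        then show "\<exists>F. F \<in> \<F> \<and> sdiam d F < ereal (1 / real (Suc n))" using sm by blast
      qed
      then obtain G where G: "\<And>n. G n \<in> \<F>" "\<And>n. sdiam d (G n) < ereal (1 / real (Suc n))"
        by (auto simp only: choice_iff)
      have "\<forall>n. \<exists>y. y \<in> \<Inter>(G ` {..n})"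
      proof
        fix n
        have "G ` {..n} \<subseteq> \<F>" using G(1) by blast
        moreover have "finite (G ` {..n})" "G ` {..n} \<noteq> {}" by auto
        ultimately have "\<Inter>(G ` {..n}) \<noteq> {}" using fip unfolding finite_intersection_property_def
          by blast
        then show "\<exists>y. y \<in> \<Inter>(G ` {..n})" by blast
      qed
      then obtain x where x: "\<And>n. x n \<in> \<Inter>(G ` {..n})" by (auto simp only: choice_iff)
      have GX: "\<And>n. G n \<subseteq> X" using G(1) cl unfolding sclosed_def by auto
      have xG: "\<And>k n. k \<le> n \<Longrightarrow> x n \<in> G k" using x by auto
      have xX: "\<And>n. x n \<in> X" using xG GX by blast
      have "scauchy X d x" unfolding scauchy_def
      proof (intro allI impI)
        fix e :: real assume "e > 0"
        then obtain k where k: "1 / real (Suc k) < e" using reals_Archimedean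
          by (metis inverse_eq_divide)
        have "\<forall>m\<ge>k. \<forall>n\<ge>k. d (x n) (x m) < e"
        proof (intro allI impI)
          fix m n assume "k \<le> m" "k \<le> n"
          then have "d (x n) (x m) < 1 / real (Suc k)" using diam_lt[OF xG xG G(2)] by blast
          then show "d (x n) (x m) < e" using k by linarith
        qed
        then show "\<exists>k. \<forall>m\<ge>k. \<forall>n\<ge>k. d (x n) (x m) < e" by blast
      qed
      then obtain l where l: "l \<in> X" "sconverges d x l" using C xX unfolding scomplete_def by blast
      have "l \<in> \<Inter>\<F>"
      proof
        fix F assume F: "F \<in> \<F>"
        show "l \<in> F"
        proof (rule ccontr)
          assume "l \<notin> F"
          then have "l \<in> X - F" using l by auto
          then obtain r where r: "r > 0" "{y\<in>X. d l y < r} \<subseteq> X - F"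
            using cl F unfolding sclosed_def sopen_def by blast
          obtain \<delta> where dl: "\<delta> > 0" "\<forall>a b. 0 \<le> a \<longrightarrow> a \<le> \<delta> \<longrightarrow> 0 \<le> b \<longrightarrow> b \<le> \<delta> \<longrightarrow> st a b < r"
            using tdef_small[OF T r(1)] by blast
          obtain k1 where k1: "1 / real (Suc k1) < \<delta>" using reals_Archimedean dl(1)
            by (metis inverse_eq_divide)
          obtain k2 where k2: "\<forall>n\<ge>k2. d l (x n) < \<delta>" using l(2) dl(1) unfolding sconverges_def by blast
          define k where "k = max k1 k2"
          have "1 / real (Suc k) \<le> 1 / real (Suc k1)"
            by (simp add: k_def frac_le)
          with k1 have kd: "1 / real (Suc k) < \<delta>" by linarith
          have "{G k, F} \<subseteq> \<F>" using G(1) F by blast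
          then have "\<Inter>{G k, F} \<noteq> {}" using fip unfolding finite_intersection_property_def
            by blast
          then obtain y where y: "y \<in> G k" "y \<in> F" by auto
          have yX: "y \<in> X" using y GX by auto
          have "d (x k) y < 1 / real (Suc k)" using diam_lt[OF xG[of k k] y(1) G(2)] by simp
          then have a1: "d (x k) y \<le> \<delta>" using kd by linarith
          have a2: "d l (x k) \<le> \<delta>" using k2 by (simp add: k_def less_imp_le)
          have "d l y < r" using tri2[OF l(1) yX xX[of k] a2 a1 dl(2)] .
          then show False using r(2) yX y(2) by auto
        qed
      qed
      then show "\<Inter>\<F> \<noteq> {}" by blast
    qed
  next
    assume H: "\<forall>\<F> :: 'a set set.
        (\<forall>F\<in>\<F>. sclosed X d F) \<longrightarrow>
        finite_intersection_property \<F> \<longrightarrow>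
        (\<forall>e>0. \<exists>F\<in>\<F>. sdiam d F < ereal e) \<longrightarrow>
        \<Inter>\<F> \<noteq> {}"
    show "scomplete X d" unfolding scomplete_def
    proof (intro allI impI)
      fix x :: "nat \<Rightarrow> 'a" assume xX: "\<forall>n. x n \<in> X" and cau: "scauchy X d x"
      define F where "F n = {y\<in>X. \<forall>r>0. \<exists>m\<ge>n. d y (x m) < r}" for n
      have xF: "x m \<in> F n" if "n \<le> m" for n m
      proof -
        have "d (x m) (x m) = 0" using xX d0 by blast
        then show ?thesis using that xX unfolding F_def by auto
      qed
      have Fmono: "F n' \<subseteq> F n" if "n \<le> n'" for n n'
        using that unfolding F_def by (auto, meson order_trans)
      have Fcl: "sclosed X d (F n)" for n
        unfolding sclosed_def sopen_def
      proof (intro conjI ballI)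
        show "F n \<subseteq> X" by (auto simp: F_def)
        show "X - F n \<subseteq> X" by auto
        fix y assume y: "y \<in> X - F n"
        then obtain r where r: "r > 0" "\<forall>m\<ge>n. \<not> d y (x m) < r" by (auto simp: F_def)
        obtain \<delta> where dl: "\<delta> > 0" "\<forall>a b. 0 \<le> a \<longrightarrow> a \<le> \<delta> \<longrightarrow> 0 \<le> b \<longrightarrow> b \<le> \<delta> \<longrightarrow> st a b < r"
          using tdef_small[OF T r(1)] by blast
        show "\<exists>r>0. {z \<in> X. d y z < r} \<subseteq> X - F n"
        proof (intro exI conjI)
          show "\<delta> > 0" by fact
          show "{z \<in> X. d y z < \<delta>} \<subseteq> X - F n"
          proof
            fix z assume z: "z \<in> {z \<in> X. d y z < \<delta>}"
            show "z \<in> X - F n"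
            proof (rule ccontr)
              assume "z \<notin> X - F n"
              then have "z \<in> F n" using z by auto
              then obtain m where m: "m \<ge> n" "d z (x m) < \<delta>" using dl(1) by (auto simp: F_def)
              have "d y (x m) < r"
                using tri2[of y "x m" z \<delta> r] y z m xX dl(2) by auto
              then show False using r m by auto
            qed
          qed
        qed
      qed
      define \<F> where "\<F> = range F"
      have "finite_intersection_property \<F>" unfolding finite_intersection_property_def
      proof (intro allI impI)
        fix \<G> assume G: "\<G> \<subseteq> \<F>" "finite \<G>" "\<G> \<noteq> {}"
        obtain N where N: "finite N" "\<G> = F ` N" using G finite_subset_image unfolding \<F>_def
          by metis
        have "x (Max N) \<in> \<Inter>\<G>"
        proof
          fix A assume "A \<in> \<G>"
          then obtain n where "n \<in> N" "A = F n" using N by auto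
          then show "x (Max N) \<in> A" using xF N(1) by auto
        qed
        then show "\<Inter>\<G> \<noteq> {}" by blast
      qed
      moreover have "\<forall>e>0. \<exists>A\<in>\<F>. sdiam d A < ereal e"
      proof (intro allI impI)
        fix e :: real assume e: "e > 0"
        obtain \<delta>1 where d1: "\<delta>1 > 0" "\<forall>a b. 0 \<le> a \<longrightarrow> a \<le> \<delta>1 \<longrightarrow> 0 \<le> b \<longrightarrow> b \<le> \<delta>1 \<longrightarrow> st a b < e/2"
          using tdef_small[OF T, of "e/2"] e by auto
        obtain \<delta>2 where d2: "\<delta>2 > 0" "\<forall>a b. 0 \<le> a \<longrightarrow> a \<le> \<delta>2 \<longrightarrow> 0 \<le> b \<longrightarrow> b \<le> \<delta>2 \<longrightarrow> st a b < \<delta>1"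
          using tdef_small[OF T d1(1)] by auto
        obtain N where N: "\<forall>m\<ge>N. \<forall>n\<ge>N. d (x n) (x m) < \<delta>2"
          using cau d2(1) unfolding scauchy_def by blast
        have "d y y' \<le> e/2" if y: "y \<in> F N" "y' \<in> F N" for y y'
        proof -
          obtain m where m: "m \<ge> N" "d y (x m) < \<delta>1" using y(1) d1(1) by (auto simp: F_def)
          obtain m' where m': "m' \<ge> N" "d y' (x m') < \<delta>2" using y(2) d2(1) by (auto simp: F_def)
          have yX: "y \<in> X" "y' \<in> X" using y by (auto simp: F_def)
          have "d (x m) (x m') < \<delta>2" using N m m' by blast
          then have a: "d (x m) (x m') \<le> \<delta>2" by simp
          have b: "d (x m') y' \<le> \<delta>2" using m'(2) dsym[of y' "x m'"] xX yX by simp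
          have "d (x m) y' < \<delta>1"
            using tri2[of "x m" y' "x m'" \<delta>2 \<delta>1, OF _ _ _ a b] xX yX d2(2) by blast
          then have "d y y' < e/2"
            using tri2[of y y' "x m" \<delta>1 "e/2"] xX yX m d1(2) by auto
          then show ?thesis by simp
        qed
        then have "sdiam d (F N) \<le> ereal (e/2)" using e by (intro diam_le) auto
        also have "\<dots> < ereal e" using e by simp
        finally show "\<exists>A\<in>\<F>. sdiam d A < ereal e" unfolding \<F>_def by blast
      qed
      ultimately have "\<Inter>\<F> \<noteq> {}" using H Fcl unfolding \<F>_def by blast
      then obtain l where l: "\<And>n. l \<in> F n" unfolding \<F>_def by auto
      have lX: "l \<in> X" using l[of 0] by (auto simp: F_def)
      have "sconverges d x l" unfolding sconverges_def
      proof (intro allI impI)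
        fix e :: real assume e: "e > 0"
        obtain \<delta> where dl: "\<delta> > 0" "\<forall>a b. 0 \<le> a \<longrightarrow> a \<le> \<delta> \<longrightarrow> 0 \<le> b \<longrightarrow> b \<le> \<delta> \<longrightarrow> st a b < e"
          using tdef_small[OF T e] by blast
        obtain N where N: "\<forall>m\<ge>N. \<forall>n\<ge>N. d (x n) (x m) < \<delta>"
          using cau dl(1) unfolding scauchy_def by blast
        obtain m where m: "m \<ge> N" "d l (x m) < \<delta>" using l[of N] dl(1) by (auto simp: F_def)
        have "\<forall>n\<ge>N. d l (x n) < e"
          using tri2[of l "x n" "x m" \<delta> e for n] lX xX m N dl(2) by (meson less_imp_le)
        then show "\<exists>k. \<forall>n\<ge>k. d l (x n) < e" by blast
      qed
      then show "\<exists>l\<in>X. sconverges d x l" using lX by blast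
    qed
  qed
qed

end
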